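(* Let $d$ be an integer with $d \ge 2$ and let $\beta \in \mathbb{C} \setminus (\mathbb{R} \cup \{i, -i\})$. Let $h_\beta(x)=(\beta x+1)/(\beta+x)$, $g_\beta(x)=h_\beta(h_\beta(x))$, $f_\beta(x) = g_\beta(x^d)$ and $z = f_\beta'(1)/d$. If $0 < \lvert \beta -1 \rvert / \lvert \beta + 1 \rvert < 1$ and $\lvert \beta \rvert \ne 1$, then (1) $g_\beta'(1)\notin \{0, \infty\}$ and $g_\beta''(1) \ne \infty$; (2) $0 < \lvert z \rvert < 1$ and $z \notin \mathbb{R}$. *)

theory Defs
  imports "HOL-Complex_Analysis.Complex_Analysis"
begin

definition h_beta :: "complex \<Rightarrow> complex \<Rightarrow> complex" where
  "h_beta \<beta> x = (\<beta> * x + 1) / (\<beta> + x)"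

definition g_beta :: "complex \<Rightarrow> complex \<Rightarrow> complex" where
  "g_beta \<beta> x = h_beta \<beta> (h_beta \<beta> x)"

definition f_beta :: "nat \<Rightarrow> complex \<Rightarrow> complex \<Rightarrow> complex" where
  "f_beta d \<beta> x = g_beta \<beta> (x ^ d)"

end

theory Submission
  imports Defs
begin

theorem lemma3p17:
  fixes d :: nat and \<beta> :: complex
  assumes "d \<ge> 2"
    and "\<beta> \<notin> \<real>" and "\<beta> \<noteq> \<i>" and "\<beta> \<noteq> - \<i>"
    and "0 < cmod (\<beta> - 1) / cmod (\<beta> + 1)" and "cmod (\<beta> - 1) / cmod (\<beta> + 1) < 1"
    and "cmod \<beta> \<noteq> 1"
  shows "((g_beta \<beta>) field_differentiable (at 1) \<and> deriv (g_beta \<beta>) 1 \<noteq> 0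
          \<and> (deriv (g_beta \<beta>)) field_differentiable (at 1))
        \<and> (0 < cmod (deriv (f_beta d \<beta>) 1 / of_nat d)
          \<and> cmod (deriv (f_beta d \<beta>) 1 / of_nat d) < 1
          \<and> deriv (f_beta d \<beta>) 1 / of_nat d \<notin> \<real>)"
proof -
  have b0: "\<beta> \<noteq> 0" using assms(2) by auto
  have bm1: "\<beta> + 1 \<noteq> 0"
  proof
    assume "\<beta> + 1 = 0" then have "\<beta> = -1" by (simp add: eq_neg_iff_add_eq_0)
    then show False using assms(2) by simp
  qed
  define c where "c = - (\<beta>\<^sup>2 + 1) / (2 * \<beta>)"
  define T where "T = - {- \<beta>, c}"
  define G where "G = (\<lambda>x. ((\<beta>\<^sup>2 + 1) * x + 2 * \<beta>) / (2 * \<beta> * x + \<beta>\<^sup>2 + 1))"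
  have oT: "open T" unfolding T_def by (intro open_Compl finite_imp_closed) auto
  have Tx: "\<beta> + x \<noteq> 0 \<and> 2 * \<beta> * x + \<beta>\<^sup>2 + 1 \<noteq> 0" if "x \<in> T" for x
  proof
    show "\<beta> + x \<noteq> 0" using that unfolding T_def by (auto simp: add_eq_0_iff)
    show "2 * \<beta> * x + \<beta>\<^sup>2 + 1 \<noteq> 0"
    proof
      assume "2 * \<beta> * x + \<beta>\<^sup>2 + 1 = 0"
      then have "x = c" unfolding c_def using b0 by (simp add: field_simps) (metis add.commute add_eq_0_iff mult.commute)
      then show False using that unfolding T_def by auto
    qed
  qed
  have gG: "g_beta \<beta> x = G x" if "x \<in> T" for x
  proof -
    from Tx[OF that] have n1: "\<beta> + x \<noteq> 0" and n2: "2 * \<beta> * x + \<beta>\<^sup>2 + 1 \<noteq> 0" by auto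
    have a1: "\<beta> + (\<beta> * x + 1) / (\<beta> + x) = (2 * \<beta> * x + \<beta>\<^sup>2 + 1) / (\<beta> + x)"
      using n1 by (simp add: field_simps power2_eq_square)
    have a2: "\<beta> * ((\<beta> * x + 1) / (\<beta> + x)) + 1 = ((\<beta>\<^sup>2 + 1) * x + 2 * \<beta>) / (\<beta> + x)"
      using n1 by (simp add: field_simps power2_eq_square)
    have "g_beta \<beta> x = (((\<beta>\<^sup>2 + 1) * x + 2 * \<beta>) / (\<beta> + x)) / ((2 * \<beta> * x + \<beta>\<^sup>2 + 1) / (\<beta> + x))"
      unfolding g_beta_def h_beta_def a1 a2 ..
    also have "\<dots> = G x" unfolding G_def using n1 by simp
    finally show ?thesis .
  qed
  have one: "1 \<in> T"
  proof -
    have "\<beta> + 1 \<noteq> 0" by (rule bm1)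
    moreover have "2 * \<beta> * 1 + \<beta>\<^sup>2 + 1 = (\<beta> + 1)\<^sup>2" by (simp add: power2_eq_square algebra_simps)
    ultimately have e: "2 * \<beta> * 1 + \<beta>\<^sup>2 + 1 \<noteq> 0" by simp
    have "1 \<noteq> -\<beta>"
    proof
      assume "1 = -\<beta>" then have "\<beta> + 1 = \<beta> + -\<beta>" by simp
      then show False using bm1 by simp
    qed
    moreover have "1 \<noteq> c"
    proof
      assume h: "1 = c"
      have "c * (2*\<beta>) = -(\<beta>\<^sup>2+1)" unfolding c_def using b0 by simp
      then have "2 * \<beta> * 1 + \<beta>\<^sup>2 + 1 = 0" using h by (simp add: algebra_simps)
      then show False using e by simp
    qed
    ultimately have "1 \<noteq> -\<beta>" "1 \<noteq> c" by auto
    then show ?thesis unfolding T_def by auto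
  qed
  have Ghol: "G holomorphic_on T" unfolding G_def
    using Tx by (intro holomorphic_intros) auto
  have ghol: "g_beta \<beta> holomorphic_on T"
    using holomorphic_transform[OF Ghol] gG by metis
  define w where "w = (\<beta> - 1) / (\<beta> + 1)"
  have DG: "(G has_field_derivative w\<^sup>2) (at 1)"
  proof -
    have "(G has_field_derivative
       (((\<beta>\<^sup>2 + 1) * (2 * \<beta> * 1 + \<beta>\<^sup>2 + 1) - ((\<beta>\<^sup>2 + 1) * 1 + 2 * \<beta>) * (2 * \<beta>)) /
        (2 * \<beta> * 1 + \<beta>\<^sup>2 + 1)\<^sup>2)) (at 1)"
      unfolding G_def using Tx[OF one]
      by (auto intro!: derivative_eq_intros simp: power2_eq_square)
    moreover have "(((\<beta>\<^sup>2 + 1) * (2 * \<beta> * 1 + \<beta>\<^sup>2 + 1) - ((\<beta>\<^sup>2 + 1) * 1 + 2 * \<beta>) * (2 * \<beta>)) /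
        (2 * \<beta> * 1 + \<beta>\<^sup>2 + 1)\<^sup>2) = w\<^sup>2"
    proof -
      have e1: "2 * \<beta> * 1 + \<beta>\<^sup>2 + 1 = (\<beta> + 1)\<^sup>2" by (simp add: power2_eq_square algebra_simps)
      have e2: "(\<beta>\<^sup>2 + 1) * (2 * \<beta> * 1 + \<beta>\<^sup>2 + 1) - ((\<beta>\<^sup>2 + 1) * 1 + 2 * \<beta>) * (2 * \<beta>) = ((\<beta> - 1) * (\<beta> + 1))\<^sup>2"
        by (simp add: power2_eq_square algebra_simps)
      have e3: "((\<beta> - 1) * (\<beta> + 1))\<^sup>2 / ((\<beta> + 1)\<^sup>2)\<^sup>2
          = ((\<beta> - 1)\<^sup>2 * (\<beta> + 1)\<^sup>2) / ((\<beta> + 1)\<^sup>2 * (\<beta> + 1)\<^sup>2)"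
        by (simp only: power_mult_distrib power2_eq_square[of "(\<beta> + 1)\<^sup>2"])
      also have "\<dots> = (\<beta> - 1)\<^sup>2 / (\<beta> + 1)\<^sup>2" using bm1 by (rule mult_divide_mult_cancel_right[OF power_not_zero])
      also have "\<dots> = w\<^sup>2" by (simp add: w_def power_divide)
      finally have calc: "((\<beta> - 1) * (\<beta> + 1))\<^sup>2 / ((\<beta> + 1)\<^sup>2)\<^sup>2 = w\<^sup>2" .
      show ?thesis by (subst e2, subst e1, rule calc)
    qed
    ultimately show ?thesis by simp
  qed
  have Dg: "(g_beta \<beta> has_field_derivative w\<^sup>2) (at 1)"
    using has_field_derivative_transform_within_open[OF DG oT one] gG by metis
  have dg: "deriv (g_beta \<beta>) 1 = w\<^sup>2" using Dg by (rule DERIV_imp_deriv)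
  have Df: "(f_beta d \<beta> has_field_derivative w\<^sup>2 * (of_nat d * 1 ^ (d - 1))) (at 1)"
  proof -
    have Dp: "((\<lambda>x. x ^ d) has_field_derivative of_nat d * 1 ^ (d - 1)) (at (1::complex))"
      using DERIV_power[OF DERIV_ident, where x="1::complex" and s=UNIV and n=d] by simp
    have Dg': "(g_beta \<beta> has_field_derivative w\<^sup>2) (at (1 ^ d))" using Dg by simp
    show ?thesis unfolding f_beta_def[abs_def] by (rule DERIV_chain2[OF Dg' Dp])
  qed
  have df: "deriv (f_beta d \<beta>) 1 / of_nat d = w\<^sup>2"
    using DERIV_imp_deriv[OF Df] assms(1) by simp
  have nw: "cmod (w\<^sup>2) = (cmod (\<beta> - 1) / cmod (\<beta> + 1))\<^sup>2"
    unfolding w_def by (simp add: norm_power norm_divide)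
  have w0: "w \<noteq> 0" using assms(5) unfolding w_def by auto
  have part1: "g_beta \<beta> field_differentiable (at 1) \<and> deriv (g_beta \<beta>) 1 \<noteq> 0
          \<and> (deriv (g_beta \<beta>)) field_differentiable (at 1)"
    using holomorphic_on_imp_differentiable_at[OF ghol oT one]
      holomorphic_on_imp_differentiable_at[OF holomorphic_deriv[OF ghol oT] oT one]
      dg w0 by simp
  have nr: "w\<^sup>2 \<notin> \<real>"
  proof
    assume "w\<^sup>2 \<in> \<real>"
    then have "Im (w\<^sup>2) = 0" by (simp add: complex_is_Real_iff)
    then have "Re w = 0 \<or> Im w = 0" by (auto simp: power2_eq_square)
    obtain a b where ab: "\<beta> = Complex a b" by (cases \<beta>)
    have bn: "b \<noteq> 0" using assms(2) ab by (auto simp: complex_is_Real_iff)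
    have D: "(a + 1)\<^sup>2 + b\<^sup>2 \<noteq> 0" using bn by (simp add: sum_power2_eq_zero_iff)
    have "w = (\<beta> - 1) * cnj (\<beta> + 1) / of_real ((a + 1)\<^sup>2 + b\<^sup>2)"
    proof -
      have "(\<beta> + 1) * cnj (\<beta> + 1) = of_real ((a + 1)\<^sup>2 + b\<^sup>2)"
        unfolding ab by (simp add: complex_eq_iff power2_eq_square)
      then show ?thesis unfolding w_def using bm1 D
        by (metis complex_cnj_zero_iff mult.commute mult_divide_mult_cancel_left_if)
    qed
    then have "Re w = (a\<^sup>2 + b\<^sup>2 - 1) / ((a + 1)\<^sup>2 + b\<^sup>2)" "Im w = 2 * b / ((a + 1)\<^sup>2 + b\<^sup>2)"
      unfolding ab by (simp_all add: Re_divide_of_real Im_divide_of_real power2_eq_square algebra_simps)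
    moreover have "a\<^sup>2 + b\<^sup>2 \<noteq> 1" using assms(7) ab by (simp add: cmod_def)
    ultimately show False using \<open>Re w = 0 \<or> Im w = 0\<close> D bn by auto
  qed
  show ?thesis
  proof -
    define r where "r = cmod (\<beta> - 1) / cmod (\<beta> + 1)"
    have r0: "0 < r" and r1: "r < 1" using assms(5,6) unfolding r_def by auto
    have "0 < r\<^sup>2" using r0 by simp
    moreover have "r\<^sup>2 < 1" using r0 r1 by (simp add: power_less_one_iff)
    ultimately show ?thesis using part1 df nw nr unfolding r_def by simp
  qed
qed

end
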